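(* There exist a ranked alphabet $\Sigma$ and a $(\Sigma,\mathrm{TSR})$-wta $\mathcal{A}$ such that $[\![\mathcal{A}]\!]^{\mathrm{init}}$ is i-recognizable by a crisp-deterministic $(\Sigma,\mathrm{TSR})$-wta and $\mathcal{N}(\mathcal{A})$ is not finite.
   Context: $\mathrm{TSR}=(\mathbb{N}\cup\{\infty\},\min,+,\infty,0)$ is the tropical semiring (addition $\min$ with neutral element $\infty$, multiplication $+$ with neutral element $0$). A ranked alphabet $\Sigma$ is a finite set of symbols with ranks, $\Sigma^{(k)}$ the symbols of rank $k$, $\Sigma^{(0)}\ne\emptyset$; $T_\Sigma$ is the set of trees. A $(\Sigma,B)$-wta over a strong bimonoid $(B,\oplus,\otimes,\mathbb{0},\mathbb{1})$ is $\mathcal{A}=(Q,\delta,F)$: $Q$ finite nonempty, $\delta_k:Q^k\times\Sigma^{(k)}\times Q\to B$, $F:Q\to B$. Vector algebra $\mathrm{V}(\mathcal{A})=(B^Q,\delta_{\mathcal{A}})$, $\delta_{\mathcal{A}}(\sigma)(v_1,\dots,v_k)_q=\bigoplus_{q_1,\dots,q_k}\big(\bigotimes_{i=1}^k(v_i)_{q_i}\big)\otimes\delta_k(q_1\dots q_k,\sigma,q)$; $h_{\mathrm{V}(\mathcal{A})}:T_\Sigma\to B^Q$ the unique homomorphism; $[\![\mathcal{A}]\!]^{\mathrm{init}}(\xi)=\bigoplus_q h_{\mathrm{V}(\mathcal{A})}(\xi)_q\otimes F_q$; a weighted tree language $r$ is i-recognizable by $\mathcal{A}$ if $r=[\![\mathcal{A}]\!]^{\mathrm{init}}$.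 Crisp-deterministic: for all $k,\sigma\in\Sigma^{(k)},q_1,\dots,q_k$ a unique $q$ with $\delta_k(q_1\dots q_k,\sigma,q)=\mathbb{1}$ and all other values $\mathbb{0}$. The Nerode algebra $\mathcal{N}(\mathcal{A})$ has as carrier the smallest subset of $B^Q$ closed under all operations $\delta_{\mathcal{A}}(\sigma)$ (equivalently $\mathrm{im}(h_{\mathrm{V}(\mathcal{A})})$), with restricted operations and root weights $v\mapsto\bigoplus_q v_q\otimes F_q$; it is finite if this carrier is finite. *)

theory Defs
  imports Main "HOL-Library.Extended_Nat"
begin

text \<open>Tropical semiring TSR = (nat \<union> {\<infinity>}, min, +, \<infinity>, 0), realised as enat:
  the semiring sum (min, big sum = INF, neutral \<infinity>) and product (+, neutral 0).\<close>

datatype 'f tree = Node 'f "'f tree list"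

definition ranked_alphabet :: "'f set \<Rightarrow> ('f \<Rightarrow> nat) \<Rightarrow> bool" where
  "ranked_alphabet \<Sigma> rk \<longleftrightarrow> finite \<Sigma> \<and> (\<exists>f\<in>\<Sigma>. rk f = 0)"

fun wf_tree :: "'f set \<Rightarrow> ('f \<Rightarrow> nat) \<Rightarrow> 'f tree \<Rightarrow> bool" where
  "wf_tree \<Sigma> rk (Node f ts) \<longleftrightarrow> f \<in> \<Sigma> \<and> length ts = rk f \<and> (\<forall>t\<in>set ts. wf_tree \<Sigma> rk t)"

text \<open>A (\<Sigma>,TSR)-wta (Q, \<delta>, F): Q a finite nonempty state set, \<delta> qs \<sigma> q the weight
  \<delta>_k(q1..qk, \<sigma>, q), F the root weights.  Values outside Q / \<Sigma> are irrelevant.\<close>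
definition wta :: "'q set \<Rightarrow> bool" where
  "wta Q \<longleftrightarrow> finite Q \<and> Q \<noteq> {}"

definition state_lists :: "'q set \<Rightarrow> nat \<Rightarrow> 'q list set" where
  "state_lists Q k = {qs. length qs = k \<and> set qs \<subseteq> Q}"

fun hV :: "'q set \<Rightarrow> ('q list \<Rightarrow> 'f \<Rightarrow> 'q \<Rightarrow> enat) \<Rightarrow> 'f tree \<Rightarrow> 'q \<Rightarrow> enat" where
  "hV Q \<delta> (Node \<sigma> ts) =
     (let vs = map (hV Q \<delta>) ts in
      (\<lambda>q. if q \<in> Q then
              (INF qs \<in> state_lists Q (length ts).
                 sum_list (map2 (\<lambda>v p. v p) vs qs) + \<delta> qs \<sigma> q)
           else \<infinity>))"

definition run_init :: "'q set \<Rightarrow> ('q list \<Rightarrow> 'f \<Rightarrow> 'q \<Rightarrow> enat) \<Rightarrow> ('q \<Rightarrow> enat) \<Rightarrow> 'f tree \<Rightarrow> enat" where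
  "run_init Q \<delta> F \<xi> = (INF q \<in> Q. hV Q \<delta> \<xi> q + F q)"

definition i_recognizes :: "'f set \<Rightarrow> ('f \<Rightarrow> nat) \<Rightarrow> 'q set \<Rightarrow> ('q list \<Rightarrow> 'f \<Rightarrow> 'q \<Rightarrow> enat)
    \<Rightarrow> ('q \<Rightarrow> enat) \<Rightarrow> ('f tree \<Rightarrow> enat) \<Rightarrow> bool" where
  "i_recognizes \<Sigma> rk Q \<delta> F r \<longleftrightarrow> wta Q \<and> (\<forall>\<xi>. wf_tree \<Sigma> rk \<xi> \<longrightarrow> r \<xi> = run_init Q \<delta> F \<xi>)"

text \<open>Crisp-deterministic: for each \<sigma> and q1..qk exactly one q has weight 1 (= 0 in TSR),
  all others weight 0 (= \<infinity> in TSR).\<close>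
definition crisp_det :: "'f set \<Rightarrow> ('f \<Rightarrow> nat) \<Rightarrow> 'q set \<Rightarrow> ('q list \<Rightarrow> 'f \<Rightarrow> 'q \<Rightarrow> enat) \<Rightarrow> bool" where
  "crisp_det \<Sigma> rk Q \<delta> \<longleftrightarrow>
     (\<forall>\<sigma>\<in>\<Sigma>. \<forall>qs\<in>state_lists Q (rk \<sigma>).
        \<exists>!q. q \<in> Q \<and> \<delta> qs \<sigma> q = 0 \<and> (\<forall>q'\<in>Q. q' \<noteq> q \<longrightarrow> \<delta> qs \<sigma> q' = \<infinity>))"

definition nerode_carrier :: "'f set \<Rightarrow> ('f \<Rightarrow> nat) \<Rightarrow> 'q set \<Rightarrow> ('q list \<Rightarrow> 'f \<Rightarrow> 'q \<Rightarrow> enat) \<Rightarrow> ('q \<Rightarrow> enat) set" where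
  "nerode_carrier \<Sigma> rk Q \<delta> = hV Q \<delta> ` {\<xi>. wf_tree \<Sigma> rk \<xi>}"

end

theory Submission
  imports Defs
begin

fun tt :: "nat \<Rightarrow> nat tree" where
  "tt 0 = Node 0 []"
| "tt (Suc n) = Node 1 [tt n]"

lemma sl0: "state_lists {0::nat} 0 = {[]}"
  by (auto simp: state_lists_def)

lemma sl1: "state_lists {0::nat} (Suc 0) = {[0]}"
  by (auto simp: state_lists_def length_Suc_conv)

definition dd :: "nat list \<Rightarrow> nat \<Rightarrow> nat \<Rightarrow> enat" where
  "dd qs s q = (if s = 0 then 0 else 1)"

lemma hv_tt: "hV {0} dd (tt n) 0 = enat n"
proof (induction n)
  case 0
  then show ?case by (simp add: sl0 dd_def zero_enat_def)
next
  case (Suc n)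
  then show ?case by (simp add: sl1 dd_def one_enat_def add.commute)
qed

lemma wf_tt: "wf_tree {0,1} (\<lambda>f. f) (tt n)"
  by (induction n) auto

theorem lemma6p6:
  shows "\<exists>(\<Sigma>::nat set) rk (Q::nat set) \<delta> F.
     ranked_alphabet \<Sigma> rk \<and> wta Q \<and>
     (\<exists>(Q'::nat set) \<delta>' F'. crisp_det \<Sigma> rk Q' \<delta>' \<and>
        i_recognizes \<Sigma> rk Q' \<delta>' F' (run_init Q \<delta> F)) \<and>
     \<not> finite (nerode_carrier \<Sigma> rk Q \<delta>)"
proof (intro exI conjI)
  show "ranked_alphabet {0,1::nat} (\<lambda>f. f)" by (simp add: ranked_alphabet_def)
  show "wta {0::nat}" by (simp add: wta_def)
  show "crisp_det {0,1::nat} (\<lambda>f. f) {0::nat} (\<lambda>_ _ _. 0)"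
    by (auto simp: crisp_det_def)
  show "i_recognizes {0,1::nat} (\<lambda>f. f) {0::nat} (\<lambda>_ _ _. 0) (\<lambda>_. \<infinity>)
          (run_init {0} dd (\<lambda>_. \<infinity>))"
    by (simp add: i_recognizes_def wta_def run_init_def)
  show "\<not> finite (nerode_carrier {0,1::nat} (\<lambda>f. f) {0::nat} dd)"
  proof
    assume fin: "finite (nerode_carrier {0,1::nat} (\<lambda>f. f) {0::nat} dd)"
    have sub: "range (\<lambda>n. hV {0} dd (tt n)) \<subseteq> nerode_carrier {0,1::nat} (\<lambda>f. f) {0::nat} dd"
      using wf_tt by (auto simp: nerode_carrier_def)
    have "inj (\<lambda>n. hV {0} dd (tt n))"
    proof (rule injI)
      fix m n assume "hV {0} dd (tt m) = hV {0} dd (tt n)"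
      then have "hV {0} dd (tt m) 0 = hV {0} dd (tt n) 0" by simp
      then show "m = n" by (simp add: hv_tt)
    qed
    then have "infinite (range (\<lambda>n. hV {0} dd (tt n)))"
      using range_inj_infinite by blast
    with sub fin show False using finite_subset by blast
  qed
qed

end
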